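(* For every $c\geq1$ let $L_c=(1,1,c)$. Then for every $n>2$, $\lim_{c\to\infty}\rho_{n,L_c}=\frac{n-2}{n}$.
   Context: Let $X$ be a finite alphabet with $n\geq 2$ letters and $X^*$ the set of words over $X$; $|v|$ is the length of a word $v$. A code over $X$ is a finite sequence $C=(v_1,\ldots,v_m)$ of words over $X$ such that every $w\in X^*$ has at most one factorization into code-words: if $w=v_{i_1}\cdots v_{i_l}=v_{j_1}\cdots v_{j_{l'}}$ with $l,l'\geq1$, then $l=l'$ and $i_t=j_t$ for all $t$. (Codes are sequences, not sets.) A code $C=(v_1,\ldots,v_m)$ is a prefix code if for all $i,j$, $v_i$ is a prefix of $v_j$ if and only if $i=j$. For a finite sequence $L=(a_1,\ldots,a_m)$ of positive integers, $UD_n(L)$ is the set of all codes $(v_1,\ldots,v_m)$ over an $n$-letter alphabet with $|v_i|=a_i$ for all $i$, $PR_n(L)\subseteq UD_n(L)$ is the subset of prefix codes, and $\rho_{n,L}=|PR_n(L)|/|UD_n(L)|$ (defined when $UD_n(L)\ne\emptyset$). *)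

theory Defs
  imports "HOL-Analysis.Analysis" "HOL-Library.Sublist"
begin

definition word_over :: "nat \<Rightarrow> nat list \<Rightarrow> bool" where
  "word_over n w \<longleftrightarrow> set w \<subseteq> {..<n}"

definition is_code :: "nat list list \<Rightarrow> bool" where
  "is_code C \<longleftrightarrow>
     (\<forall>is js. is \<noteq> [] \<longrightarrow> js \<noteq> [] \<longrightarrow>
        set is \<subseteq> {..<length C} \<longrightarrow> set js \<subseteq> {..<length C} \<longrightarrow>
        concat (map (\<lambda>i. C ! i) is) = concat (map (\<lambda>j. C ! j) js) \<longrightarrow> is = js)"

definition is_prefix_code :: "nat list list \<Rightarrow> bool" where
  "is_prefix_code C \<longleftrightarrow>
     (\<forall>i<length C. \<forall>j<length C. prefix (C ! i) (C ! j) \<longleftrightarrow> i = j)"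

definition UD :: "nat \<Rightarrow> nat list \<Rightarrow> nat list list set" where
  "UD n L = {C. length C = length L \<and> (\<forall>i<length L. length (C ! i) = L ! i)
              \<and> (\<forall>w\<in>set C. word_over n w) \<and> is_code C}"

definition PR :: "nat \<Rightarrow> nat list \<Rightarrow> nat list list set" where
  "PR n L = {C \<in> UD n L. is_prefix_code C}"

definition rho :: "nat \<Rightarrow> nat list \<Rightarrow> real" where
  "rho n L = real (card (PR n L)) / real (card (UD n L))"

end

theory Submission imports Defs begin

definition gl :: "nat \<Rightarrow> nat \<Rightarrow> nat \<Rightarrow> nat" where "gl a b i = (if i = 0 then a else b)"

lemma concat_letters:
  assumes "set ks \<subseteq> {0,1}"
  shows "concat (map (\<lambda>i. [[a],[b],w] ! i) ks) = map (gl a b) ks"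
  using assms by (induction ks) (auto simp: gl_def)

lemma letters_inj:
  assumes "a \<noteq> b" "set ks \<subseteq> {0,1}" "set ks' \<subseteq> {0,1}" "map (gl a b) ks = map (gl a b) ks'"
  shows "ks = ks'"
proof -
  have i: "inj_on (gl a b) {0,1}"
    using assms(1) by (auto simp: inj_on_def gl_def)
  have "inj_on (gl a b) (set ks \<union> set ks')"
    using assms(2,3) by (intro inj_on_subset[OF i]) auto
  thus ?thesis using assms(4) inj_on_map_eq_map by blast
qed

lemma split2:
  assumes "2 \<in> set (js::nat list)" "set js \<subseteq> {0,1,2}"
  obtains ks r where "js = ks @ 2 # r" "set ks \<subseteq> {0,1}" "set r \<subseteq> {0,1,2}"
proof -
  obtain ks r where "js = ks @ 2 # r" "2 \<notin> set ks" using split_list_first[OF assms(1)] by blast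
  thus ?thesis using that assms(2) by auto
qed

lemma code_main:
  fixes a b :: nat
  assumes ab: "a \<noteq> b" and w: "w = u @ x # v" "set u \<subseteq> {a,b}" "x \<notin> {a,b}"
  shows "set is \<subseteq> {0,1,2} \<Longrightarrow> set js \<subseteq> {0,1,2} \<Longrightarrow>
    concat (map (\<lambda>i. [[a],[b],w] ! i) is) = concat (map (\<lambda>i. [[a],[b],w] ! i) js) \<Longrightarrow> is = js"
proof (induction "length is" arbitrary: "is" js rule: less_induct)
  case less
  let ?C = "\<lambda>i. [[a],[b],w] ! i"
  have gab: "set (map (gl a b) ks) \<subseteq> {a,b}" for ks by (auto simp: gl_def)
  have xin: "x \<in> set (concat (map ?C (ks @ 2 # r)))" for ks r using w by simp
  show ?case
  proof (cases "2 \<in> set is")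
    case False
    then have i01: "set is \<subseteq> {0,1}" using less.prems by auto
    show ?thesis
    proof (cases "2 \<in> set js")
      case False
      then have "set js \<subseteq> {0,1}" using less.prems by auto
      then show ?thesis using i01 less.prems(3) letters_inj[OF ab] by (simp add: concat_letters)
    next
      case True
      then obtain ks r where "js = ks @ 2 # r" using split2 less.prems by metis
      then have "x \<in> set (concat (map ?C is))" using less.prems(3) xin by metis
      then show ?thesis using i01 concat_letters gab w(3) by (metis subsetD)
    qed
  next
    case True
    then obtain ks1 r1 where 1: "is = ks1 @ 2 # r1" "set ks1 \<subseteq> {0,1}" "set r1 \<subseteq> {0,1,2}"
      using split2 less.prems by metis
    show ?thesis
    proof (cases "2 \<in> set js")
      case False
      then have j01: "set js \<subseteq> {0,1}" using less.prems by auto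
      have "x \<in> set (concat (map ?C js))" using less.prems(3) xin 1 by metis
      then show ?thesis using j01 concat_letters gab w(3) by (metis subsetD)
    next
      case True
      then obtain ks2 r2 where 2: "js = ks2 @ 2 # r2" "set ks2 \<subseteq> {0,1}" "set r2 \<subseteq> {0,1,2}"
        using split2 less.prems by metis
      define P where "P = (\<lambda>z. z \<in> {a,b})"
      have e1: "concat (map ?C is) = map (gl a b) ks1 @ u @ x # (v @ concat (map ?C r1))"
        using 1 w concat_letters by simp
      have e2: "concat (map ?C js) = map (gl a b) ks2 @ u @ x # (v @ concat (map ?C r2))"
        using 2 w concat_letters by simp
      have t1: "takeWhile P (concat (map ?C is)) = map (gl a b) ks1 @ u"
        unfolding e1 using gab w P_def by (subst takeWhile_append2, auto)+
      have t2: "takeWhile P (concat (map ?C js)) = map (gl a b) ks2 @ u"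
        unfolding e2 using gab w P_def by (subst takeWhile_append2, auto)+
      have "map (gl a b) ks1 = map (gl a b) ks2" using t1 t2 less.prems(3) by simp
      then have k: "ks1 = ks2" using letters_inj[OF ab] 1 2 by blast
      have "concat (map ?C r1) = concat (map ?C r2)" using e1 e2 less.prems(3) k by simp
      then have "r1 = r2" using less.hyps[of r1 r2] 1 2 by simp
      then show ?thesis using 1 2 k by simp
    qed
  qed
qed

definition PP :: "nat \<Rightarrow> (nat \<times> nat) set" where
  "PP n = {(a,b). a < n \<and> b < n \<and> a \<noteq> b}"
definition Wu :: "nat \<Rightarrow> nat \<Rightarrow> nat \<Rightarrow> nat \<Rightarrow> nat list set" where
  "Wu n c a b = {w. set w \<subseteq> {..<n} \<and> length w = c \<and> \<not> set w \<subseteq> {a,b}}"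
definition Wp :: "nat \<Rightarrow> nat \<Rightarrow> nat \<Rightarrow> nat \<Rightarrow> nat list set" where
  "Wp n c a b = {w. set w \<subseteq> {..<n} \<and> length w = c \<and> hd w \<notin> {a,b}}"
definition mk :: "(nat \<times> nat) \<times> nat list \<Rightarrow> nat list list" where
  "mk p = [[fst (fst p)], [snd (fst p)], snd p]"

lemma all3: "(\<forall>i<(3::nat). P i) = (P 0 \<and> P 1 \<and> P 2)"
proof
  assume "\<forall>i<3. P i" then show "P 0 \<and> P 1 \<and> P 2" by simp
next
  assume H: "P 0 \<and> P 1 \<and> P 2"
  show "\<forall>i<3. P i"
  proof (intro allI impI)
    fix i :: nat assume "i < 3"
    then have "i = 0 \<or> i = 1 \<or> i = 2" by auto
    then show "P i" using H by auto
  qed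
qed

lemma len3: "length C = 3 \<Longrightarrow> C = [C!0, C!1, C!2]"
  by (auto simp: numeral_3_eq_3 length_Suc_conv)

lemma len1: "length v = 1 \<Longrightarrow> v = [v!0]"
  by (auto simp: length_Suc_conv)

lemma in_UD_iff:
  assumes c: "c \<ge> 2"
  shows "[[a],[b],w] \<in> UD n [1,1,c] \<longleftrightarrow>
     a < n \<and> b < n \<and> a \<noteq> b \<and> set w \<subseteq> {..<n} \<and> length w = c \<and> \<not> set w \<subseteq> {a,b}"
proof
  assume U: "[[a],[b],w] \<in> UD n [1,1,c]"
  let ?C = "\<lambda>i. [[a],[b],w] ! i"
  have basic: "a < n" "b < n" "set w \<subseteq> {..<n}" "length w = c"
    using U by (auto simp: UD_def word_over_def all3)
  have code: "is_code [[a],[b],w]" using U by (simp add: UD_def)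
  have H: "\<forall>is js. is \<noteq> [] \<longrightarrow> js \<noteq> [] \<longrightarrow>
        set is \<subseteq> {..<length [[a],[b],w]} \<longrightarrow> set js \<subseteq> {..<length [[a],[b],w]} \<longrightarrow>
        concat (map (\<lambda>i. [[a],[b],w] ! i) is) = concat (map (\<lambda>j. [[a],[b],w] ! j) js) \<longrightarrow> is = js"
    using code unfolding is_code_def .
  have ab: "a \<noteq> b"
  proof
    assume "a = b"
    have "[0::nat] = [1]" by (rule H[rule_format]) (use \<open>a = b\<close> in simp_all)
    then show False by simp
  qed
  have nab: "\<not> set w \<subseteq> {a,b}"
  proof
    assume sw: "set w \<subseteq> {a,b}"
    define ks where "ks = map (\<lambda>z. if z = a then 0 else (1::nat)) w"
    have ks01: "set ks \<subseteq> {0,1}" by (auto simp: ks_def)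
    have "map (gl a b) ks = w" unfolding ks_def map_map
      by (rule map_idI) (use sw in \<open>auto simp: gl_def\<close>)
    then have e: "concat (map ?C [2]) = concat (map ?C ks)"
      using concat_letters[OF ks01, of a b w] by simp
    have ne: "ks \<noteq> []" "length ks \<noteq> 1" using basic c by (auto simp: ks_def)
    have s3: "set ks \<subseteq> {..<length [[a],[b],w]}" using ks01 by auto
    have "[2::nat] = ks" by (rule H[rule_format]) (use ne s3 e in simp_all)
    then show False using ne by auto
  qed
  show "a < n \<and> b < n \<and> a \<noteq> b \<and> set w \<subseteq> {..<n} \<and> length w = c \<and> \<not> set w \<subseteq> {a,b}"
    using basic ab nab by blast
next
  assume H: "a < n \<and> b < n \<and> a \<noteq> b \<and> set w \<subseteq> {..<n} \<and> length w = c \<and> \<not> set w \<subseteq> {a,b}"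
  then have ab: "a \<noteq> b" and nab: "\<not> set w \<subseteq> {a,b}" and lw: "length w = c"
    and an: "a < n" and bn: "b < n" and wn: "set w \<subseteq> {..<n}" by blast+
  then have "\<exists>x\<in>set w. x \<notin> {a,b}" by blast
  then obtain u x v where w: "w = u @ x # v" "x \<notin> {a,b}" "\<forall>y\<in>set u. \<not> y \<notin> {a,b}"
    using split_list_first_prop[of w "\<lambda>x. x \<notin> {a,b}"] by blast
  have su: "set u \<subseteq> {a,b}" using w(3) by blast
  have l3: "{..<length [[a],[b],w]} = {0,1,2::nat}" by auto
  have "is_code [[a],[b],w]" unfolding is_code_def l3
  proof (intro allI impI)
    fix "is" js :: "nat list"
    assume p: "is \<noteq> []" "js \<noteq> []" "set is \<subseteq> {0,1,2}" "set js \<subseteq> {0,1,2}"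
      "concat (map ((!) [[a],[b],w]) is) = concat (map ((!) [[a],[b],w]) js)"
    show "is = js" by (rule code_main[OF ab w(1) su w(2) p(3) p(4) p(5)])
  qed
  moreover have "length [[a],[b],w] = length [1,1,c]" by simp
  moreover have "\<forall>i<length [1,1,c]. length ([[a],[b],w] ! i) = [1,1,c] ! i"
  proof -
    have e: "length [1,1,c] = (3::nat)" by simp
    show ?thesis unfolding e all3 using lw by simp
  qed
  moreover have "\<forall>v\<in>set [[a],[b],w]. word_over n v" using an bn wn by (simp add: word_over_def)
  ultimately show "[[a],[b],w] \<in> UD n [1,1,c]" unfolding UD_def by blast
qed

lemma UD_eq:
  assumes c: "c \<ge> 2"
  shows "UD n [1,1,c] = mk ` (SIGMA p:PP n. Wu n c (fst p) (snd p))"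
proof
  show "UD n [1,1,c] \<subseteq> mk ` (SIGMA p:PP n. Wu n c (fst p) (snd p))"
  proof
    fix C assume C: "C \<in> UD n [1,1,c]"
    have l: "length C = 3" "length (C!0) = 1" "length (C!1) = 1"
      using C by (auto simp: UD_def all3)
    define a where "a = C!0!0"
    define b where "b = C!1!0"
    define w where "w = C!2"
    have Ce: "C = [[a],[b],w]" unfolding a_def b_def w_def
      using len3[OF l(1)] len1[OF l(2)] len1[OF l(3)] by metis
    then have "a < n \<and> b < n \<and> a \<noteq> b \<and> set w \<subseteq> {..<n} \<and> length w = c \<and> \<not> set w \<subseteq> {a,b}"
      using C in_UD_iff[OF c] by simp
    then have "((a,b),w) \<in> (SIGMA p:PP n. Wu n c (fst p) (snd p))"
      by (auto simp: PP_def Wu_def)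
    moreover have "C = mk ((a,b),w)" using Ce by (simp add: mk_def)
    ultimately show "C \<in> mk ` (SIGMA p:PP n. Wu n c (fst p) (snd p))" by blast
  qed
next
  show "mk ` (SIGMA p:PP n. Wu n c (fst p) (snd p)) \<subseteq> UD n [1,1,c]"
    using in_UD_iff[OF c] by (auto simp: mk_def PP_def Wu_def)
qed

lemma prefix_iff:
  assumes "a \<noteq> b" "length w \<ge> 2"
  shows "is_prefix_code [[a],[b],w] \<longleftrightarrow> hd w \<notin> {a,b}"
proof -
  obtain x y v where w: "w = x # y # v" using assms(2)
    by (cases w; cases "tl w") auto
  have l: "length [[a],[b],x # y # v] = 3" by simp
  show ?thesis using assms(1) unfolding is_prefix_code_def w l all3
    by auto
qed

lemma PR_eq:
  assumes c: "c \<ge> 2"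
  shows "PR n [1,1,c] = mk ` (SIGMA p:PP n. Wp n c (fst p) (snd p))"
proof -
  have "PR n [1,1,c] = {C \<in> mk ` (SIGMA p:PP n. Wu n c (fst p) (snd p)). is_prefix_code C}"
    unfolding PR_def UD_eq[OF c] ..
  also have "\<dots> = mk ` (SIGMA p:PP n. Wp n c (fst p) (snd p))"
  proof (intro equalityI subsetI)
    fix C assume "C \<in> {C \<in> mk ` (SIGMA p:PP n. Wu n c (fst p) (snd p)). is_prefix_code C}"
    then obtain a b w where "C = [[a],[b],w]" "(a,b) \<in> PP n" "w \<in> Wu n c a b" "is_prefix_code C"
      by (auto simp: mk_def)
    moreover then have "hd w \<notin> {a,b}" using prefix_iff[of a b w] c by (auto simp: PP_def Wu_def)
    ultimately have "((a,b),w) \<in> (SIGMA p:PP n. Wp n c (fst p) (snd p))" "C = mk ((a,b),w)"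
      by (auto simp: mk_def Wu_def Wp_def)
    then show "C \<in> mk ` (SIGMA p:PP n. Wp n c (fst p) (snd p))" by blast
  next
    fix C assume "C \<in> mk ` (SIGMA p:PP n. Wp n c (fst p) (snd p))"
    then obtain a b w where C: "C = [[a],[b],w]" "(a,b) \<in> PP n" "w \<in> Wp n c a b"
      by (auto simp: mk_def)
    then have "w \<noteq> []" using c by (auto simp: Wp_def)
    then have "hd w \<in> set w" by simp
    then have "\<not> set w \<subseteq> {a,b}" using C(3) by (auto simp: Wp_def)
    then have "w \<in> Wu n c a b" using C(3) by (auto simp: Wp_def Wu_def)
    moreover have "is_prefix_code C" using C prefix_iff[of a b w] c by (auto simp: PP_def Wp_def)
    moreover have "((a,b),w) \<in> (SIGMA p:PP n. Wu n c (fst p) (snd p))" "C = mk ((a,b),w)"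
      using C \<open>w \<in> Wu n c a b\<close> by (auto simp: mk_def)
    ultimately show "C \<in> {C \<in> mk ` (SIGMA p:PP n. Wu n c (fst p) (snd p)). is_prefix_code C}"
      by blast
  qed
  finally show ?thesis .
qed


lemma lists_fin: "finite {w::nat list. set w \<subseteq> {..<n} \<and> length w = c}"
  by (rule finite_lists_length_eq) simp

lemma card_PP: "card (PP n) = n * (n - 1)"
proof -
  have e: "PP n = (SIGMA a:{..<n}. {..<n} - {a})" by (auto simp: PP_def)
  have "card (SIGMA a:{..<n}. {..<n} - {a}) = (\<Sum>a\<in>{..<n}. card ({..<n} - {a}))"
    by (rule card_SigmaI) auto
  also have "\<dots> = (\<Sum>a\<in>{..<n}. n - 1)" by (rule sum.cong) auto
  finally show ?thesis using e by simp
qed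

lemma fin_PP: "finite (PP n)"
  by (rule finite_subset[of _ "{..<n} \<times> {..<n}"]) (auto simp: PP_def)

lemma card_Wu:
  assumes "a < n" "b < n" "a \<noteq> b"
  shows "card (Wu n c a b) = n ^ c - 2 ^ c"
proof -
  let ?A = "{w::nat list. set w \<subseteq> {..<n} \<and> length w = c}"
  let ?B = "{w::nat list. set w \<subseteq> {a,b} \<and> length w = c}"
  have e: "Wu n c a b = ?A - ?B" by (auto simp: Wu_def)
  have sub: "?B \<subseteq> ?A" using assms by auto
  have fB: "finite ?B" by (rule finite_lists_length_eq) simp
  have cA: "card ?A = n ^ c" using card_lists_length_eq[of "{..<n}" c] by simp
  have cB: "card ?B = 2 ^ c"
  proof -
    have "card ?B = card {a,b} ^ c" by (rule card_lists_length_eq) simp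
    moreover have "card {a,b} = 2" using assms by simp
    ultimately show ?thesis by metis
  qed
  show ?thesis unfolding e card_Diff_subset[OF fB sub] cA cB ..
qed

lemma fin_Wu: "finite (Wu n c a b)"
  by (rule finite_subset[OF _ lists_fin[of n c]]) (auto simp: Wu_def)

lemma fin_Wp: "finite (Wp n c a b)"
  by (rule finite_subset[OF _ lists_fin[of n c]]) (auto simp: Wp_def)

lemma card_Wp:
  assumes "a < n" "b < n" "a \<noteq> b"
  shows "card (Wp n (Suc m) a b) = (n - 2) * n ^ m"
proof -
  let ?A = "{w::nat list. set w \<subseteq> {..<n} \<and> length w = m}"
  let ?f = "\<lambda>p::nat \<times> nat list. fst p # snd p"
  have e: "Wp n (Suc m) a b = ?f ` (({..<n} - {a,b}) \<times> ?A)"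
  proof (intro equalityI subsetI)
    fix w assume "w \<in> Wp n (Suc m) a b"
    then obtain x v where "w = x # v" "x < n" "x \<notin> {a,b}" "set v \<subseteq> {..<n}" "length v = m"
      by (cases w) (auto simp: Wp_def)
    then show "w \<in> ?f ` (({..<n} - {a,b}) \<times> ?A)"
      by (auto intro!: image_eqI[of _ _ "(x,v)"])
  next
    fix w assume "w \<in> ?f ` (({..<n} - {a,b}) \<times> ?A)"
    then show "w \<in> Wp n (Suc m) a b" by (auto simp: Wp_def)
  qed
  have inj: "inj_on ?f (({..<n} - {a,b}) \<times> ?A)" by (auto simp: inj_on_def)
  have c1: "card ({..<n} - {a,b}) = n - 2"
    using assms by (subst card_Diff_subset) auto
  have c2: "card ?A = n ^ m" using card_lists_length_eq[of "{..<n}" m] by simp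
  show ?thesis unfolding e card_image[OF inj] card_cartesian_product c1 c2 ..
qed

lemma inj_mk: "inj mk"
  by (auto simp: inj_def mk_def prod_eq_iff)

lemma card_UD:
  assumes "c \<ge> 2"
  shows "card (UD n [1,1,c]) = n * (n - 1) * (n ^ c - 2 ^ c)"
proof -
  have "card (UD n [1,1,c]) = card (SIGMA p:PP n. Wu n c (fst p) (snd p))"
    unfolding UD_eq[OF assms] by (rule card_image[OF inj_on_subset[OF inj_mk]]) simp
  also have "\<dots> = (\<Sum>p\<in>PP n. card (Wu n c (fst p) (snd p)))"
    by (rule card_SigmaI) (auto simp: fin_PP fin_Wu)
  also have "\<dots> = (\<Sum>p\<in>PP n. n ^ c - 2 ^ c)"
    by (rule sum.cong) (auto simp: PP_def card_Wu)
  finally show ?thesis by (simp add: card_PP)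
qed

lemma card_PR:
  shows "card (PR n [1,1,Suc (Suc k)]) = n * (n - 1) * ((n - 2) * n ^ Suc k)"
proof -
  have "card (PR n [1,1,Suc (Suc k)]) = card (SIGMA p:PP n. Wp n (Suc (Suc k)) (fst p) (snd p))"
    unfolding PR_eq[of "Suc (Suc k)", OF le_add1[of 2 k, unfolded add_2_eq_Suc]] by (rule card_image[OF inj_on_subset[OF inj_mk]]) simp
  also have "\<dots> = (\<Sum>p\<in>PP n. card (Wp n (Suc (Suc k)) (fst p) (snd p)))"
    by (rule card_SigmaI) (auto simp: fin_PP fin_Wp)
  also have "\<dots> = (\<Sum>p\<in>PP n. (n - 2) * n ^ Suc k)"
    by (rule sum.cong) (auto simp: PP_def card_Wp)
  finally show ?thesis by (simp add: card_PP)
qed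

lemma rho_formula:
  assumes n: "n > 2"
  shows "rho n [1,1,Suc (Suc k)] = ((real n - 2) / real n) / (1 - (2 / real n) ^ Suc (Suc k))"
proof -
  let ?c = "Suc (Suc k)"
  have le: "2 ^ ?c < n ^ ?c" using n by (intro power_strict_mono) auto
  have r1: "real (n ^ ?c - 2 ^ ?c) = real n ^ ?c - 2 ^ ?c" using le by (simp add: of_nat_diff)
  have r2: "real (n - 2) = real n - 2" using n by (simp add: of_nat_diff)
  have r3: "real (n - 1) = real n - 1" using n by (simp add: of_nat_diff)
  have pos: "real n ^ ?c - 2 ^ ?c > 0"
  proof -
    have "(2::real) ^ ?c < real n ^ ?c" using n by (intro power_strict_mono) auto
    then show ?thesis by simp
  qed
  have K: "real n * (real n - 1) > 0" using n by simp
  have "rho n [1,1,?c] = (real n * (real n - 1) * ((real n - 2) * real n ^ Suc k)) /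
        (real n * (real n - 1) * (real n ^ ?c - 2 ^ ?c))"
    unfolding rho_def card_PR card_UD[of ?c n, OF le_add1[of 2 k, unfolded add_2_eq_Suc]] using r1 r2 r3 n
    by (simp add: of_nat_diff)
  also have "\<dots> = ((real n - 2) * real n ^ Suc k) / (real n ^ ?c - 2 ^ ?c)"
    using K n by simp
  also have "\<dots> = ((real n - 2) / real n) / (1 - (2 / real n) ^ ?c)"
    using pos n by (simp add: power_divide field_simps)
  finally show ?thesis .
qed

theorem theorem5:
  fixes n :: nat
  assumes "n > 2"
  shows "(\<lambda>c. rho n [1, 1, c]) \<longlonglongrightarrow> (real n - 2) / real n"
proof -
  let ?K = "(real n - 2) / real n"
  have "norm (2 / real n) < 1" using assms by (simp add: field_simps)
  then have "(\<lambda>c. (2 / real n) ^ c) \<longlonglongrightarrow> 0" by (rule LIMSEQ_power_zero)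
  then have "(\<lambda>c. ?K / (1 - (2 / real n) ^ c)) \<longlonglongrightarrow> ?K / (1 - 0)"
    by (rule tendsto_divide[OF tendsto_const tendsto_diff[OF tendsto_const]]) simp
  then have L: "(\<lambda>c. ?K / (1 - (2 / real n) ^ c)) \<longlonglongrightarrow> ?K" by simp
  have ev: "eventually (\<lambda>c. ?K / (1 - (2 / real n) ^ c) = rho n [1, 1, c]) sequentially"
    unfolding eventually_sequentially
  proof (intro exI allI impI)
    fix c :: nat assume "2 \<le> c"
    then obtain k where "c = Suc (Suc k)" using add_2_eq_Suc le_Suc_ex by metis
    then show "?K / (1 - (2 / real n) ^ c) = rho n [1, 1, c]" using rho_formula[OF assms] by simp
  qed
  show ?thesis by (rule Lim_transform_eventually[OF L ev])
qed

end
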